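(* Let $N\ge2$, let $\alpha(N)$ be given by $\alpha(2)=2\pi$ and $\alpha(N)=N(N-2)\frac{\pi^{N/2}}{\Gamma(N/2+1)}$ for $N\ge3$, let $K>0$ and $C$, $\alpha$ be real constants, and put $\epsilon^*=\frac{\alpha(N)e^C}{4}$. Let $a(t)$ be a nonvanishing function and let $\Phi(s)$ be a $C^2$ function on an interval $I\ni0$ satisfying \[ s\ddot\Phi(s)+\dot\Phi(s)-\epsilon^*e^{-\Phi(s)/K}=0\ \text{on } I,\qquad \Phi(0)=\alpha,\quad \dot\Phi(0)=\epsilon^*e^{-\alpha/K}. \] Then, with $s=\frac{x_1^2+x_2^2}{a(t)}\in I$, the density \[ \rho(t,\vec x)=\frac{1}{a(t)}\exp\!\Big(-\frac{\Phi(s)}{K}+C\Big) \] and the potential $\Phi(t,\vec x)=\Phi\big(\frac{x_1^2+x_2^2}{a(t)}\big)$ satisfy the Poisson equation $\Delta\Phi(t,\vec x)=\alpha(N)\rho(t,\vec x)$ in $\mathbb{R}^N$ (the Laplacian taken in $\vec x$).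
   Context: $\Gamma$ is the Gamma function; $\dot\Phi=d\Phi/ds$. *)

theory Defs
  imports "HOL-Analysis.Analysis"
begin

definition alphaN :: "nat \<Rightarrow> real" where
  "alphaN N = (if N = 2 then 2 * pi
               else real N * (real N - 2) * pi powr (real N / 2) / Gamma (real N / 2 + 1))"

text \<open>Points of R^N are represented as functions nat => real; the coordinates are
  x 0, ..., x (N-1) (so the paper's x_1, x_2 are x 0, x 1).\<close>

definition twice_diff_at :: "(real \<Rightarrow> real) \<Rightarrow> real \<Rightarrow> bool" where
  "twice_diff_at g y \<longleftrightarrow> (\<forall>\<^sub>F z in nhds y. g differentiable (at z)) \<and> deriv g differentiable (at y)"

definition second_partial :: "((nat \<Rightarrow> real) \<Rightarrow> real) \<Rightarrow> nat \<Rightarrow> (nat \<Rightarrow> real) \<Rightarrow> real" where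
  "second_partial u i x = deriv (deriv (\<lambda>h. u (x(i := h)))) (x i)"

definition laplacian :: "nat \<Rightarrow> ((nat \<Rightarrow> real) \<Rightarrow> real) \<Rightarrow> (nat \<Rightarrow> real) \<Rightarrow> real" where
  "laplacian N u x = (\<Sum>i<N. second_partial u i x)"

end

theory Submission imports Defs begin

lemma slice:
  fixes Phi dPhi ddPhi :: "real \<Rightarrow> real" and I :: "real set" and A c h0 :: real
  assumes A: "A \<noteq> 0" and oI: "open I"
    and d1: "\<And>s. s \<in> I \<Longrightarrow> (Phi has_real_derivative dPhi s) (at s)"
    and d2: "\<And>s. s \<in> I \<Longrightarrow> (dPhi has_real_derivative ddPhi s) (at s)"
    and h0: "(h0^2 + c) / A \<in> I"
  shows "twice_diff_at (\<lambda>h. Phi ((h^2 + c) / A)) h0 \<and>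
         deriv (deriv (\<lambda>h. Phi ((h^2 + c) / A))) h0 =
           ddPhi ((h0^2 + c) / A) * (2*h0/A) * (2*h0/A) + dPhi ((h0^2 + c) / A) * (2 / A)"
proof -
  define S where "S = {h. (h^2 + c) / A \<in> I}"
  have "S = (\<lambda>h. (h^2 + c) / A) -` I" by (auto simp: S_def)
  then have oS: "open S"
    by (auto intro!: continuous_open_vimage continuous_intros simp: oI A)
  have h0S: "h0 \<in> S" using h0 by (simp add: S_def)
  define g1 where "g1 h = dPhi ((h^2 + c) / A) * (2*h/A)" for h
  have D1: "((\<lambda>h. Phi ((h^2 + c) / A)) has_real_derivative g1 h) (at h)" if "h \<in> S" for h
  proof -
    have "((\<lambda>h. (h^2 + c) / A) has_real_derivative (2*h/A)) (at h)"
      using A by (auto intro!: derivative_eq_intros)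
    from DERIV_chain2[OF d1 this] that show ?thesis by (simp add: S_def g1_def)
  qed
  have dg: "deriv (\<lambda>h. Phi ((h^2 + c) / A)) h = g1 h" if "h \<in> S" for h
    using D1[OF that] by (rule DERIV_imp_deriv)
  have D2: "(g1 has_real_derivative
      ddPhi ((h0^2 + c) / A) * (2*h0/A) * (2*h0/A) + dPhi ((h0^2 + c) / A) * (2 / A)) (at h0)"
  proof -
    have "((\<lambda>h. (h^2 + c) / A) has_real_derivative (2*h0/A)) (at h0)"
      using A by (auto intro!: derivative_eq_intros)
    from DERIV_chain2[OF d2[OF h0] this]
    have "((\<lambda>h. dPhi ((h^2 + c) / A)) has_real_derivative ddPhi ((h0^2 + c) / A) * (2*h0/A)) (at h0)" .
    moreover have "((\<lambda>h. 2*h/A) has_real_derivative 2/A) (at h0)"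
      using A by (auto intro!: derivative_eq_intros)
    ultimately have "(g1 has_real_derivative ddPhi ((h0^2 + c) / A) * (2*h0/A) * (2*h0/A) + (2/A) * dPhi ((h0^2 + c) / A)) (at h0)"
      unfolding g1_def by (rule DERIV_mult)
    then show ?thesis by (simp add: algebra_simps)
  qed
  have D2': "(deriv (\<lambda>h. Phi ((h^2 + c) / A)) has_real_derivative
      ddPhi ((h0^2 + c) / A) * (2*h0/A) * (2*h0/A) + dPhi ((h0^2 + c) / A) * (2 / A)) (at h0)"
    by (rule has_field_derivative_transform_within_open[OF D2 oS h0S]) (simp add: dg)
  have ev: "\<forall>\<^sub>F z in nhds h0. (\<lambda>h. Phi ((h^2 + c) / A)) differentiable (at z)"
    using oS h0S D1 unfolding eventually_nhds real_differentiable_def by blast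
  show ?thesis
    using ev D2' unfolding twice_diff_at_def real_differentiable_def
    by (auto intro: DERIV_imp_deriv)
qed

theorem lemma3:
  fixes N :: nat and K C alpha0 :: real and a :: "real \<Rightarrow> real"
    and Phi dPhi ddPhi :: "real \<Rightarrow> real" and I :: "real set"
  assumes N: "N \<ge> 2"
    and K: "K > 0"
    and a_nz: "\<And>t. a t \<noteq> 0"
    and I: "is_interval I" "open I" "0 \<in> I"
    and d1: "\<And>s. s \<in> I \<Longrightarrow> (Phi has_real_derivative dPhi s) (at s)"
    and d2: "\<And>s. s \<in> I \<Longrightarrow> (dPhi has_real_derivative ddPhi s) (at s)"
    and d2c: "continuous_on I ddPhi"
    and ode: "\<And>s. s \<in> I \<Longrightarrow>
               s * ddPhi s + dPhi s - (alphaN N * exp C / 4) * exp (- Phi s / K) = 0"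
    and init: "Phi 0 = alpha0" "dPhi 0 = (alphaN N * exp C / 4) * exp (- alpha0 / K)"
  shows "\<forall>t (x :: nat \<Rightarrow> real). ((x 0)\<^sup>2 + (x 1)\<^sup>2) / a t \<in> I \<longrightarrow>
           ((\<forall>i<N. twice_diff_at (\<lambda>h. (\<lambda>y. Phi (((y 0)\<^sup>2 + (y 1)\<^sup>2) / a t)) (x(i := h))) (x i))
            \<and> laplacian N (\<lambda>y. Phi (((y 0)\<^sup>2 + (y 1)\<^sup>2) / a t)) x
                = alphaN N * ((1 / a t) * exp (- Phi (((x 0)\<^sup>2 + (x 1)\<^sup>2) / a t) / K + C)))"
proof (intro allI impI)
  fix t and x :: "nat \<Rightarrow> real"
  assume sI: "((x 0)\<^sup>2 + (x 1)\<^sup>2) / a t \<in> I"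
  define A where "A = a t"
  have A: "A \<noteq> 0" using a_nz by (simp add: A_def)
  define u where "u = (\<lambda>y::nat\<Rightarrow>real. Phi (((y 0)\<^sup>2 + (y 1)\<^sup>2) / a t))"
  have e0: "(\<lambda>h. u (x(0 := h))) = (\<lambda>h. Phi ((h^2 + (x 1)^2) / A))"
    by (simp add: u_def A_def)
  have e1: "(\<lambda>h. u (x(1 := h))) = (\<lambda>h. Phi ((h^2 + (x 0)^2) / A))"
    by (simp add: u_def A_def add.commute)
  have ek: "(\<lambda>h. u (x(i := h))) = (\<lambda>h. u x)" if "i \<ge> 2" for i
    using that by (simp add: u_def)
  have s0: "((x 0)^2 + (x 1)^2) / A \<in> I" using sI by (simp add: A_def)
  have s1: "((x 1)^2 + (x 0)^2) / A \<in> I" using sI by (simp add: A_def add.commute)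
  note S0 = slice[OF A I(2) d1 d2 s0]
  note S1 = slice[OF A I(2) d1 d2 s1]
  have cderiv: "deriv (\<lambda>h. c) = (\<lambda>h. 0)" for c :: real
    by (rule ext, rule DERIV_imp_deriv) simp
  have ctd: "twice_diff_at (\<lambda>h. c) y" for c y :: real
    unfolding twice_diff_at_def cderiv by simp
  have td: "twice_diff_at (\<lambda>h. u (x(i := h))) (x i)" if "i < N" for i
  proof -
    consider "i = 0" | "i = 1" | "i \<ge> 2" by linarith
    then show ?thesis
      by cases (use S0 S1 e0 e1 ek ctd in auto)
  qed
  have sp: "second_partial u i x = 0" if "i \<ge> 2" for i
    unfolding second_partial_def ek[OF that] cderiv by simp
  have split: "{..<N} = {0,1} \<union> {2..<N}" using N by auto
  have lap: "laplacian N u x = second_partial u 0 x + second_partial u 1 x"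
    unfolding laplacian_def split
    by (subst sum.union_disjoint) (auto simp: sp)
  also have "\<dots> = (4 / A) * (((x 0)^2 + (x 1)^2) / A * ddPhi (((x 0)^2 + (x 1)^2) / A)
                      + dPhi (((x 0)^2 + (x 1)^2) / A))"
    using S0 S1 A unfolding second_partial_def e0 e1
    by (simp add: add.commute field_simps power2_eq_square)
  also have "\<dots> = (4 / A) * ((alphaN N * exp C / 4) * exp (- Phi (((x 0)^2 + (x 1)^2) / A) / K))"
  proof -
    have "((x 0)^2 + (x 1)^2) / A * ddPhi (((x 0)^2 + (x 1)^2) / A)
                      + dPhi (((x 0)^2 + (x 1)^2) / A) = (alphaN N * exp C / 4) * exp (- Phi (((x 0)^2 + (x 1)^2) / A) / K)"
      using ode[OF s0] by linarith
    then show ?thesis by (simp only:)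
  qed
  also have "\<dots> = alphaN N * ((1 / A) * exp (- Phi (((x 0)^2 + (x 1)^2) / A) / K + C))"
    by (simp add: exp_add exp_minus exp_diff field_simps)
  finally show "(\<forall>i<N. twice_diff_at (\<lambda>h. (\<lambda>y. Phi (((y 0)\<^sup>2 + (y 1)\<^sup>2) / a t)) (x(i := h))) (x i))
            \<and> laplacian N (\<lambda>y. Phi (((y 0)\<^sup>2 + (y 1)\<^sup>2) / a t)) x
                = alphaN N * ((1 / a t) * exp (- Phi (((x 0)\<^sup>2 + (x 1)\<^sup>2) / a t) / K + C))"
    using td unfolding u_def A_def by simp
qed

end
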